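(* Let $T_{skewcw,2}=\sum_{\sigma\in S_3}\operatorname{sgn}(\sigma)\, e_{\sigma(1)}\otimes e_{\sigma(2)}\otimes e_{\sigma(3)}\in \Lambda^3\mathbb{C}^3\subset\mathbb{C}^3\otimes\mathbb{C}^3\otimes\mathbb{C}^3$ (where $e_1,e_2,e_3$ is a basis of $\mathbb{C}^3$), and let $W=a_1\otimes b_1\otimes c_2+a_1\otimes b_2\otimes c_1+a_2\otimes b_1\otimes c_1\in\mathbb{C}^2\otimes\mathbb{C}^2\otimes\mathbb{C}^2$ (with $\{a_i\},\{b_j\},\{c_k\}$ bases of the three copies of $\mathbb{C}^2$). Then the Kronecker product $T_{skewcw,2}\boxtimes W\in\mathbb{C}^6\otimes\mathbb{C}^6\otimes\mathbb{C}^6$ has border rank nine.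
   Context: The border rank of a tensor is the smallest $s$ such that it is a limit of tensors that are sums of $s$ tensors of the form $a\otimes b\otimes c$. For $T\in A\otimes B\otimes C$ and $T'\in A'\otimes B'\otimes C'$, the Kronecker product $T\boxtimes T'$ is $T\otimes T'$ regarded as an element of $(A\otimes A')\otimes(B\otimes B')\otimes(C\otimes C')$. *)

theory Defs
  imports "HOL-Analysis.Analysis" "HOL-Library.Numeral_Type" "HOL-Combinatorics.Permutations"
begin

text \<open>A tensor in A \<otimes> B \<otimes> C, with A = C^'a, B = C^'b, C = C^'c (finite index types),
  is represented by its coordinate array with respect to the chosen bases.\<close>
type_synonym ('a, 'b, 'c) tensor = "'a \<Rightarrow> 'b \<Rightarrow> 'c \<Rightarrow> complex"

definition rank_le_set :: "nat \<Rightarrow> ('a, 'b, 'c) tensor set" where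
  "rank_le_set s = {T. \<exists>(x :: nat \<Rightarrow> 'a \<Rightarrow> complex) (y :: nat \<Rightarrow> 'b \<Rightarrow> complex)
       (z :: nat \<Rightarrow> 'c \<Rightarrow> complex).
       T = (\<lambda>i j k. \<Sum>l<s. x l i * y l j * z l k)}"

definition border_rank :: "('a::finite, 'b::finite, 'c::finite) tensor \<Rightarrow> nat" where
  "border_rank T = (LEAST s. \<exists>S :: nat \<Rightarrow> ('a, 'b, 'c) tensor.
      (\<forall>n. S n \<in> rank_le_set s) \<and> (\<forall>i j k. (\<lambda>n. S n i j k) \<longlonglongrightarrow> T i j k))"

definition kron :: "('a, 'b, 'c) tensor \<Rightarrow> ('d, 'e, 'f) tensor \<Rightarrow> ('a \<times> 'd, 'b \<times> 'e, 'c \<times> 'f) tensor" where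
  "kron T T' = (\<lambda>(i, i') (j, j') (k, k'). T i j k * T' i' j' k')"

text \<open>T_{skewcw,2} = sum over sigma in S_3 of sgn(sigma) e_{sigma(1)} \<otimes> e_{sigma(2)} \<otimes> e_{sigma(3)};
  the basis e_1, e_2, e_3 is indexed by the elements 0, 1, 2 of the type 3.\<close>
definition T_skewcw2 :: "(3, 3, 3) tensor" where
  "T_skewcw2 = (\<lambda>i j k. \<Sum>\<sigma> \<in> {\<sigma>. \<sigma> permutes (UNIV :: 3 set)}.
      of_int (sign \<sigma>) * (if \<sigma> 0 = i \<and> \<sigma> 1 = j \<and> \<sigma> 2 = k then 1 else 0))"

text \<open>W = a_1 \<otimes> b_1 \<otimes> c_2 + a_1 \<otimes> b_2 \<otimes> c_1 + a_2 \<otimes> b_1 \<otimes> c_1, with index 1 \<mapsto> 0 and 2 \<mapsto> 1 of type 2.\<close>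
definition W_tensor :: "(2, 2, 2) tensor" where
  "W_tensor = (\<lambda>i j k. if (i, j, k) \<in> {(0, 0, 1), (0, 1, 0), (1, 0, 0)} then 1 else 0)"

end

theory Submission
  imports Defs
begin

lemma det_low_rank:
  fixes M :: "complex^'n^'n"
  assumes M: "\<And>a b. M $ a $ b = (\<Sum>t<N. U a t * V t b)" and N: "N < CARD('n)"
  shows "det M = 0"
proof -
  obtain h where h: "bij_betw h {0..<CARD('n)} (UNIV :: 'n set)"
    using ex_bij_betw_nat_finite[of "UNIV :: 'n set"] by auto
  define g where "g = the_inv_into {0..<CARD('n)} h"
  have gh: "g (h t) = t" if "t < CARD('n)" for t
    unfolding g_def using h that by (simp add: bij_betw_def the_inv_into_f_f)
  define U' :: "complex^'n^'n" where "U' = (\<chi> a c. if g c < N then U a (g c) else 0)"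
  define V' :: "complex^'n^'n" where "V' = (\<chi> c b. if g c < N then V (g c) b else 0)"
  have "M = U' ** V'"
  proof -
    have "(U' ** V') $ a $ b = M $ a $ b" for a b
    proof -
      have "(U' ** V') $ a $ b = (\<Sum>c\<in>UNIV. (if g c < N then U a (g c) * V (g c) b else 0))"
        by (simp add: matrix_matrix_mult_def U'_def V'_def if_distrib cong: if_cong)
      also have "\<dots> = (\<Sum>t\<in>{0..<CARD('n)}. (if g (h t) < N then U a (g (h t)) * V (g (h t)) b else 0))"
        using sum.reindex_bij_betw[OF h, of "\<lambda>c. if g c < N then U a (g c) * V (g c) b else 0"] by simp
      also have "\<dots> = (\<Sum>t\<in>{0..<CARD('n)}. (if t < N then U a t * V t b else 0))"
        by (rule sum.cong) (auto simp: gh)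
      also have "\<dots> = (\<Sum>t\<in>{0..<CARD('n)} \<inter> {t. t < N}. U a t * V t b)"
        by (simp add: sum.inter_restrict)
      also have "{0..<CARD('n)} \<inter> {t. t < N} = {..<N}" using N by auto
      finally show ?thesis using M by simp
    qed
    then show ?thesis by (simp add: vec_eq_iff)
  qed
  moreover have "det U' = 0"
  proof -
    have "column (h N) U' = 0"
      using gh[OF N] by (simp add: column_def U'_def vec_eq_iff)
    then show ?thesis by (rule det_zero_column(1))
  qed
  ultimately show ?thesis by (simp add: det_mul)
qed

lemma ex3: "(x::3) = 0 \<or> x = 1 \<or> x = 2"
proof -
  have "(3::3) = 0" by simp
  then show ?thesis using exhaust_3[of x] by auto
qed

lemma ex2: "(x::2) = 0 \<or> x = 1"
proof -
  have "(2::2) = 0" by simp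
  then show ?thesis using exhaust_2[of x] by auto
qed

lemma neq3 [simp]: "(0::3) \<noteq> 1" "(1::3) \<noteq> 0" "(0::3) \<noteq> 2" "(2::3) \<noteq> 0" "(1::3) \<noteq> 2" "(2::3) \<noteq> 1"
  by simp_all

lemma neq2 [simp]: "(0::2) \<noteq> 1" "(1::2) \<noteq> 0"
  by simp_all

lemma UNIV3: "(UNIV::3 set) = {0,1,2}" using ex3 by auto
lemma UNIV2: "(UNIV::2 set) = {0,1}" using ex2 by auto

lemma sum3: "sum f (UNIV::3 set) = f 0 + f 1 + f 2"
  unfolding UNIV3 by (simp add: ac_simps)
lemma sum2: "sum f (UNIV::2 set) = f 0 + f 1"
  unfolding UNIV2 by (simp add: ac_simps)

definition eps3 :: "3 \<Rightarrow> 3 \<Rightarrow> 3 \<Rightarrow> complex" where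
  "eps3 i j k = (if (i=0\<and>j=1\<and>k=2) \<or> (i=1\<and>j=2\<and>k=0) \<or> (i=2\<and>j=0\<and>k=1) then 1
     else if (i=0\<and>j=2\<and>k=1) \<or> (i=2\<and>j=1\<and>k=0) \<or> (i=1\<and>j=0\<and>k=2) then -1 else 0)"

lemma perm3_eq:
  assumes "\<sigma> 0 = \<tau> 0" "\<sigma> 1 = \<tau> 1" "\<sigma> 2 = \<tau> 2" shows "\<sigma> = (\<tau>::3\<Rightarrow>3)"
proof
  fix x :: 3 show "\<sigma> x = \<tau> x" using ex3[of x] assms by (elim disjE) simp_all
qed

lemma skew_sum_one:
  assumes p: "\<tau> permutes (UNIV::3 set)" and v: "\<tau> 0 = i" "\<tau> 1 = j" "\<tau> 2 = k"
  shows "(\<Sum>\<sigma> \<in> {\<sigma>. \<sigma> permutes (UNIV :: 3 set)}.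
      of_int (sign \<sigma>) * (if \<sigma> 0 = i \<and> \<sigma> 1 = j \<and> \<sigma> 2 = k then 1 else 0)) = (of_int (sign \<tau>) :: complex)"
proof -
  have "(\<Sum>\<sigma> \<in> {\<sigma>. \<sigma> permutes (UNIV :: 3 set)}.
      of_int (sign \<sigma>) * (if \<sigma> 0 = i \<and> \<sigma> 1 = j \<and> \<sigma> 2 = k then 1 else 0)) =
      (\<Sum>\<sigma> \<in> {\<sigma>. \<sigma> permutes (UNIV :: 3 set)}. if \<sigma> = \<tau> then (of_int (sign \<sigma>) :: complex) else 0)"
  proof (rule sum.cong[OF refl])
    fix \<sigma> :: "3 \<Rightarrow> 3"
    have "(\<sigma> 0 = i \<and> \<sigma> 1 = j \<and> \<sigma> 2 = k) = (\<sigma> = \<tau>)"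
    proof
      assume "\<sigma> 0 = i \<and> \<sigma> 1 = j \<and> \<sigma> 2 = k"
      then show "\<sigma> = \<tau>" using v by (intro perm3_eq) simp_all
    next
      assume "\<sigma> = \<tau>" then show "\<sigma> 0 = i \<and> \<sigma> 1 = j \<and> \<sigma> 2 = k" using v by simp
    qed
    then show "of_int (sign \<sigma>) * (if \<sigma> 0 = i \<and> \<sigma> 1 = j \<and> \<sigma> 2 = k then 1 else 0) =
      (if \<sigma> = \<tau> then (of_int (sign \<sigma>) :: complex) else 0)" by simp
  qed
  also have "\<dots> = of_int (sign \<tau>)"
    using p by (simp add: finite_permutations)
  finally show ?thesis .
qed

lemma skew_sum_zero:
  assumes "\<not> (i \<noteq> j \<and> j \<noteq> k \<and> i \<noteq> (k::3))"
  shows "(\<Sum>\<sigma> \<in> {\<sigma>. \<sigma> permutes (UNIV :: 3 set)}.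
      of_int (sign \<sigma>) * (if \<sigma> 0 = i \<and> \<sigma> 1 = j \<and> \<sigma> 2 = k then 1 else 0)) = (0::complex)"
proof (rule sum.neutral, rule ballI)
  fix \<sigma> assume "\<sigma> \<in> {\<sigma>. \<sigma> permutes (UNIV::3 set)}"
  then have s: "\<sigma> permutes (UNIV::3 set)" by simp
  then have ij: "inj \<sigma>" by (rule permutes_inj)
  have d: "\<sigma> 0 \<noteq> \<sigma> 1" "\<sigma> 1 \<noteq> \<sigma> 2" "\<sigma> 0 \<noteq> \<sigma> 2"
    using injD[OF ij] neq3 by metis+
  have "\<not> (\<sigma> 0 = i \<and> \<sigma> 1 = j \<and> \<sigma> 2 = k)"
  proof
    assume "\<sigma> 0 = i \<and> \<sigma> 1 = j \<and> \<sigma> 2 = k"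
    then have "i \<noteq> j \<and> j \<noteq> k \<and> i \<noteq> k" using d by simp
    then show False using assms by simp
  qed
  then show "of_int (sign \<sigma>) * (if \<sigma> 0 = i \<and> \<sigma> 1 = j \<and> \<sigma> 2 = k then 1 else 0) = (0::complex)"
    by simp
qed

lemma T_skewcw2_eq: "T_skewcw2 i j k = eps3 i j k"
proof -
  have pt: "Transposition.transpose a b permutes (UNIV::3 set)" for a b by (rule permutes_swap_id) auto
  have pc: "Transposition.transpose a b \<circ> Transposition.transpose c d permutes (UNIV::3 set)" for a b c d
    by (rule permutes_compose) (rule pt)+
  have sc: "sign (Transposition.transpose a b \<circ> Transposition.transpose c d) = sign (Transposition.transpose a b) * sign (Transposition.transpose c (d::3))" for a b c d
    by (rule sign_compose) (auto intro: permutation_swap_id)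
  have tv: "Transposition.transpose a b x = (if x = a then b else if x = b then a else x)" for a b x :: 3
    by (simp add: Transposition.transpose_def)
  consider "i=0" "j=1" "k=2" | "i=1" "j=2" "k=0" | "i=2" "j=0" "k=1" | "i=0" "j=2" "k=1" | "i=2" "j=1" "k=0" | "i=1" "j=0" "k=2"
    | "\<not> (i \<noteq> j \<and> j \<noteq> k \<and> i \<noteq> (k::3))"
    using ex3[of i] ex3[of j] ex3[of k] by auto
  then show ?thesis
  proof cases
    case 1
    have v: "id 0 = i" "id 1 = j" "id 2 = k" using 1 by simp_all
    show ?thesis unfolding T_skewcw2_def skew_sum_one[OF permutes_id v] sign_id using 1 by (simp add: eps3_def)
  next
    case 2
    let ?t = "Transposition.transpose (0::3) 1 \<circ> Transposition.transpose 1 2"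
    have v: "?t 0 = i" "?t 1 = j" "?t 2 = k" using 2 by (simp_all only: comp_apply tv) simp_all
    have s: "sign ?t = 1" using sc[of 0 1 1 2] by (simp add: sign_swap_id)
    show ?thesis unfolding T_skewcw2_def skew_sum_one[OF pc v] s using 2 by (simp add: eps3_def)
  next
    case 3
    let ?t = "Transposition.transpose (0::3) 2 \<circ> Transposition.transpose 1 2"
    have v: "?t 0 = i" "?t 1 = j" "?t 2 = k" using 3 by (simp_all only: comp_apply tv) simp_all
    have s: "sign ?t = 1" using sc[of 0 2 1 2] by (simp add: sign_swap_id)
    show ?thesis unfolding T_skewcw2_def skew_sum_one[OF pc v] s using 3 by (simp add: eps3_def)
  next
    case 4
    let ?t = "Transposition.transpose (1::3) 2"
    have v: "?t 0 = i" "?t 1 = j" "?t 2 = k" using 4 by (simp_all only: tv) simp_all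
    have s: "sign ?t = -1" by (simp add: sign_swap_id)
    show ?thesis unfolding T_skewcw2_def skew_sum_one[OF pt v] s using 4 by (simp add: eps3_def)
  next
    case 5
    let ?t = "Transposition.transpose (0::3) 2"
    have v: "?t 0 = i" "?t 1 = j" "?t 2 = k" using 5 by (simp_all only: tv) simp_all
    have s: "sign ?t = -1" by (simp add: sign_swap_id)
    show ?thesis unfolding T_skewcw2_def skew_sum_one[OF pt v] s using 5 by (simp add: eps3_def)
  next
    case 6
    let ?t = "Transposition.transpose (0::3) 1"
    have v: "?t 0 = i" "?t 1 = j" "?t 2 = k" using 6 by (simp_all only: tv) simp_all
    have s: "sign ?t = -1" by (simp add: sign_swap_id)
    show ?thesis unfolding T_skewcw2_def skew_sum_one[OF pt v] s using 6 by (simp add: eps3_def)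
  next
    case 7 show ?thesis unfolding T_skewcw2_def skew_sum_zero[OF 7] using 7 by (auto simp add: eps3_def)
  qed
qed


lemma sum_UNIV_prod: "sum f (UNIV :: ('a::finite \<times> 'b::finite) set) = (\<Sum>a\<in>UNIV. \<Sum>b\<in>UNIV. f (a, b))"
  by (simp add: sum.cartesian_product)

lemma forall3: "(\<forall>i::3. P i) = (P 0 \<and> P 1 \<and> P 2)" using ex3 by metis
lemma forall2: "(\<forall>i::2. P i) = (P 0 \<and> P 1)" using ex2 by metis

type_synonym idx = "3 \<times> (3 \<times> 2)"

definition flat :: "(3 \<times> 2, 3 \<times> 2, 3 \<times> 2) tensor \<Rightarrow> complex^idx^idx" where
  "flat S = (\<chi> a b. \<Sum>r\<in>UNIV. eps3 (fst a) (fst b) r * S (r, 0) (snd b) (snd a))"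

definition T0 :: "(3 \<times> 2, 3 \<times> 2, 3 \<times> 2) tensor" where "T0 = kron T_skewcw2 W_tensor"

definition dl :: "'a \<Rightarrow> 'a \<Rightarrow> complex" where "dl x y = (if x = y then 1 else 0)"

definition Kf :: "3 \<Rightarrow> 3 \<Rightarrow> 3 \<Rightarrow> 3 \<Rightarrow> complex" where
  "Kf q k0 p j0 = dl q j0 * dl p k0 - dl q k0 * dl p j0"
definition Ki :: "3 \<Rightarrow> 3 \<Rightarrow> 3 \<Rightarrow> 3 \<Rightarrow> complex" where
  "Ki p j0 q k0 = dl p k0 * dl j0 q - dl p j0 * dl q k0 / 2"
definition Sw :: "2 \<Rightarrow> 2 \<Rightarrow> complex" where "Sw j k = (if j \<noteq> k then 1 else 0)"

lemma eps_contract: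
  "(\<Sum>r\<in>UNIV. eps3 q p r * eps3 r a b) = dl q a * dl p b - dl q b * dl p a"
proof -
  have "\<forall>q p a b. (\<Sum>r\<in>UNIV. eps3 q p r * eps3 r a b) = dl q a * dl p b - dl q b * dl p a"
    unfolding forall3 sum3 by (simp add: eps3_def dl_def)
  then show ?thesis by blast
qed

lemma W_tensor_0: "W_tensor 0 j k = Sw j k"
  using ex2[of j] ex2[of k] by (auto simp: W_tensor_def Sw_def)

definition Binv :: "complex^idx^idx" where
  "Binv = (\<chi> b c. Ki (fst b) (fst (snd b)) (fst c) (fst (snd c)) * Sw (snd (snd b)) (snd (snd c)))"

lemma T0_val: "T0 (r, i1) (j0, j1) (k0, k1) = eps3 r j0 k0 * W_tensor i1 j1 k1"
  unfolding T0_def kron_def T_skewcw2_eq by simp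

lemma flat_T0: "flat T0 $ (q, (k0, k1)) $ (p, (j0, j1)) = Kf q k0 p j0 * Sw j1 k1"
proof -
  have "flat T0 $ (q, (k0, k1)) $ (p, (j0, j1)) = (\<Sum>r\<in>UNIV. eps3 q p r * T0 (r, 0) (j0, j1) (k0, k1))"
    unfolding flat_def by (simp only: vec_lambda_beta fst_conv snd_conv)
  also have "\<dots> = (\<Sum>r\<in>UNIV. eps3 q p r * eps3 r j0 k0) * W_tensor 0 j1 k1"
    unfolding T0_val sum_distrib_right by (simp only: mult.assoc)
  also have "\<dots> = Kf q k0 p j0 * Sw j1 k1"
    unfolding eps_contract W_tensor_0 Kf_def by (rule refl)
  finally show ?thesis .
qed

lemma KKi: "(\<Sum>p\<in>UNIV. \<Sum>j0\<in>UNIV. Kf q k0 p j0 * Ki p j0 q' k0') = dl q q' * dl k0 k0'"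
  unfolding sum3
  using ex3[of q] ex3[of k0] ex3[of q'] ex3[of k0']
  by (elim disjE; simp add: Kf_def Ki_def dl_def)

lemma SS: "(\<Sum>j1\<in>UNIV. Sw j1 k1 * Sw j1 k1') = dl k1 k1'"
proof -
  have "\<forall>k1 k1'. (\<Sum>j1\<in>UNIV. Sw j1 k1 * Sw j1 k1') = dl k1 k1'"
    unfolding forall2 sum2 by (simp add: Sw_def dl_def)
  then show ?thesis by blast
qed

lemma flat_T0_inv: "flat T0 ** Binv = mat 1"
proof -
  have "(flat T0 ** Binv) $ a $ c = mat 1 $ a $ c" for a c
  proof -
    obtain q k0 k1 where a: "a = (q, (k0, k1))" by (metis prod.exhaust)
    obtain q' k0' k1' where c: "c = (q', (k0', k1'))" by (metis prod.exhaust)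
    have "(flat T0 ** Binv) $ a $ c = (\<Sum>b\<in>UNIV. flat T0 $ a $ b * Binv $ b $ c)"
      unfolding matrix_matrix_mult_def by (simp only: vec_lambda_beta)
    also have "\<dots> = (\<Sum>p\<in>UNIV. \<Sum>j0\<in>UNIV. \<Sum>j1\<in>UNIV. flat T0 $ (q, (k0, k1)) $ (p, (j0, j1)) * Binv $ (p, (j0, j1)) $ (q', (k0', k1')))"
      unfolding a c by (simp only: sum_UNIV_prod)
    also have "\<dots> = (\<Sum>p\<in>UNIV. \<Sum>j0\<in>UNIV. \<Sum>j1\<in>UNIV. (Kf q k0 p j0 * Ki p j0 q' k0') * (Sw j1 k1 * Sw j1 k1'))"
      unfolding flat_T0 Binv_def by (simp only: vec_lambda_beta fst_conv snd_conv mult_ac)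
    also have "\<dots> = (\<Sum>p\<in>UNIV. \<Sum>j0\<in>UNIV. Kf q k0 p j0 * Ki p j0 q' k0') * (\<Sum>j1\<in>UNIV. Sw j1 k1 * Sw j1 k1')"
      unfolding sum_distrib_right unfolding sum_distrib_left by (rule refl)
    also have "\<dots> = dl q q' * dl k0 k0' * dl k1 k1'" unfolding KKi SS ..
    also have "\<dots> = mat 1 $ a $ c" unfolding a c mat_def dl_def by simp
    finally show ?thesis .
  qed
  then show ?thesis by (simp add: vec_eq_iff)
qed

lemma det_flat_T0: "det (flat T0) \<noteq> 0"
proof
  assume "det (flat T0) = 0"
  then have "det (flat T0 ** Binv) = 0" by (simp add: det_mul)
  then show False unfolding flat_T0_inv by simp
qed

definition Kmat :: "(3 \<Rightarrow> complex) \<Rightarrow> 3 \<Rightarrow> 3 \<Rightarrow> complex" where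
  "Kmat v q p = (\<Sum>r\<in>UNIV. eps3 q p r * v r)"

definition U1 :: "(3 \<Rightarrow> complex) \<Rightarrow> 3 \<Rightarrow> complex" where
  "U1 v = (if v 0 \<noteq> 0 then (\<lambda>q. Kmat v q 1) else (\<lambda>q. Kmat v q 0))"
definition U2 :: "(3 \<Rightarrow> complex) \<Rightarrow> 3 \<Rightarrow> complex" where
  "U2 v = (if v 0 \<noteq> 0 \<or> v 1 \<noteq> 0 then (\<lambda>q. Kmat v q 2) else (\<lambda>q. Kmat v q 1))"
definition W1 :: "(3 \<Rightarrow> complex) \<Rightarrow> 3 \<Rightarrow> complex" where
  "W1 v = (if v 0 \<noteq> 0 then (\<lambda>p. dl p 1 - v 1 / v 0 * dl p 0) else (\<lambda>p. dl p 0))"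
definition W2 :: "(3 \<Rightarrow> complex) \<Rightarrow> 3 \<Rightarrow> complex" where
  "W2 v = (if v 0 \<noteq> 0 then (\<lambda>p. dl p 2 - v 2 / v 0 * dl p 0)
     else if v 1 \<noteq> 0 then (\<lambda>p. dl p 2 - v 2 / v 1 * dl p 1) else (\<lambda>p. dl p 1))"

lemma Kmat_expl: "Kmat v q p = (if q = 0 \<and> p = 1 then v 2 else if q = 0 \<and> p = 2 then - v 1
   else if q = 1 \<and> p = 0 then - v 2 else if q = 1 \<and> p = 2 then v 0
   else if q = 2 \<and> p = 0 then v 1 else if q = 2 \<and> p = 1 then - v 0 else 0)"
  unfolding Kmat_def sum3
  using ex3[of q] ex3[of p] by (elim disjE; simp add: eps3_def)

lemma Kfact: "Kmat v q p = U1 v q * W1 v p + U2 v q * W2 v p"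
proof (cases "v 0 \<noteq> 0")
  case True
  then show ?thesis unfolding U1_def W1_def U2_def W2_def Kmat_expl
    using ex3[of q] ex3[of p] by (elim disjE; simp add: dl_def field_simps)
next
  case f0: False
  show ?thesis
  proof (cases "v 1 \<noteq> 0")
    case True
    then show ?thesis unfolding U1_def W1_def U2_def W2_def Kmat_expl
      using f0 ex3[of q] ex3[of p] by (elim disjE; simp add: dl_def field_simps)
  next
    case False
    then show ?thesis unfolding U1_def W1_def U2_def W2_def Kmat_expl
      using f0 ex3[of q] ex3[of p] by (elim disjE; simp add: dl_def field_simps)
  qed
qed

lemma sum_double: "sum f {..<2 * (s::nat)} = (\<Sum>l<s. f (2*l) + f (2*l+1))"
  by (induction s) (simp_all add: sum.distrib add_ac)

lemma det_flat_rank: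
  fixes x y z :: "nat \<Rightarrow> 3 \<times> 2 \<Rightarrow> complex"
  assumes S: "S = (\<lambda>i j k. \<Sum>l<s. x l i * y l j * z l k)" and s: "s < 9"
  shows "det (flat S) = 0"
proof -
  define v where "v l = (\<lambda>r. x l (r, 0))" for l
  define UU where "UU a t = (if even t then U1 else U2) (v (t div 2)) (fst a) * z (t div 2) (snd a)" for a :: idx and t :: nat
  define VV where "VV t b = (if even t then W1 else W2) (v (t div 2)) (fst b) * y (t div 2) (snd b)" for b :: idx and t :: nat
  have "flat S $ a $ b = (\<Sum>t\<in>{..<2 * s}. UU a t * VV t b)" for a b
  proof -
    have "flat S $ a $ b = (\<Sum>r\<in>UNIV. eps3 (fst a) (fst b) r * (\<Sum>l<s. x l (r,0) * y l (snd b) * z l (snd a)))"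
      unfolding flat_def S by simp
    also have "\<dots> = (\<Sum>l<s. Kmat (v l) (fst a) (fst b) * y l (snd b) * z l (snd a))"
      unfolding Kmat_def v_def sum_distrib_left sum_distrib_right
      by (subst sum.swap) (simp add: mult_ac)
    also have "\<dots> = (\<Sum>l<s. UU a (2*l) * VV (2*l) b + UU a (2*l+1) * VV (2*l+1) b)"
      unfolding Kfact UU_def VV_def by (simp add: algebra_simps)
    also have "\<dots> = (\<Sum>t\<in>{..<2 * s}. UU a t * VV t b)" by (simp add: sum_double)
    finally show ?thesis .
  qed
  moreover have "2 * s < CARD(idx)" using s by simp
  ultimately show ?thesis by (rule det_low_rank)
qed

lemma det_tendsto:
  fixes A :: "nat \<Rightarrow> complex^'n^'n"
  assumes "\<And>a b. (\<lambda>n. A n $ a $ b) \<longlonglongrightarrow> B $ a $ b"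
  shows "(\<lambda>n. det (A n)) \<longlonglongrightarrow> det B"
  unfolding det_def
  by (intro tendsto_intros assms)

lemma flat_tendsto:
  assumes "\<And>i j k. (\<lambda>n. S n i j k) \<longlonglongrightarrow> T i j k"
  shows "(\<lambda>n. flat (S n) $ a $ b) \<longlonglongrightarrow> flat T $ a $ b"
  unfolding flat_def vec_lambda_beta
  by (intro tendsto_intros assms)

lemma lower_bound:
  assumes "\<forall>n. S n \<in> rank_le_set s" and "\<forall>i j k. (\<lambda>n. S n i j k) \<longlonglongrightarrow> T0 i j k"
  shows "9 \<le> s"
proof (rule ccontr)
  assume "\<not> 9 \<le> s"
  then have s: "s < 9" by simp
  have z: "det (flat (S n)) = 0" for n
  proof -
    from assms(1) obtain x y z where "S n = (\<lambda>i j k. \<Sum>l<s. x l i * y l j * z l k)"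
      unfolding rank_le_set_def by blast
    then show ?thesis using s by (rule det_flat_rank)
  qed
  have lim: "(\<lambda>n. det (flat (S n))) \<longlonglongrightarrow> det (flat T0)"
    by (intro det_tendsto flat_tendsto) (use assms(2) in blast)
  have "(\<lambda>n. det (flat (S n))) = (\<lambda>n. 0)" using z by (rule ext)
  with lim have "(\<lambda>n. 0::complex) \<longlonglongrightarrow> det (flat T0)" by simp
  then have "det (flat T0) = 0" using LIMSEQ_unique[OF tendsto_const] by metis
  then show False using det_flat_T0 by simp
qed

definition vec3 :: "complex \<Rightarrow> complex \<Rightarrow> complex \<Rightarrow> 3 \<Rightarrow> complex" where
  "vec3 a b c i = (if i = 0 then a else if i = 1 then b else c)"

lemma vec3_simps [simp]: "vec3 a b c 0 = a" "vec3 a b c 1 = b" "vec3 a b c 2 = c"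
  by (simp_all add: vec3_def)

definition pp :: "3 \<Rightarrow> 3 \<Rightarrow> 3 \<Rightarrow> complex" where
  "pp i j k = (if i = 0 \<and> j = 1 \<and> k = 2 then 1 else 0)"

definition a1 :: "nat \<Rightarrow> 3 \<Rightarrow> complex" where
  "a1 l = (if l = 0 then vec3 1 (-1) (-1) else if l = 1 then vec3 0 0 (-1) else if l = 2 then vec3 0 1 1 else vec3 0 (-1) 0)"
definition b1 :: "nat \<Rightarrow> 3 \<Rightarrow> complex" where
  "b1 l = (if l = 0 then vec3 0 0 1 else if l = 1 then vec3 1 (-1) (-1) else if l = 2 then vec3 1 0 (-1) else vec3 1 0 0)"
definition c1 :: "nat \<Rightarrow> 3 \<Rightarrow> complex" where
  "c1 l = (if l = 0 then vec3 0 (-1) 0 else if l = 1 then vec3 (-1) 0 0 else if l = 2 then vec3 (-1) 1 0 else vec3 (-1) 1 1)"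

definition a2 :: "nat \<Rightarrow> 3 \<Rightarrow> complex" where
  "a2 l = (if l = 0 then vec3 (-1/4) (1/4) (-1/4) else if l = 1 then vec3 (1/4) (-1/4) (-1/4) else if l = 2 then vec3 (1/4) (1/4) (1/4) else vec3 (-1/4) (-1/4) (1/4))"
definition b2 :: "nat \<Rightarrow> 3 \<Rightarrow> complex" where
  "b2 l = (if l = 0 then vec3 1 (-1) (-1) else if l = 1 then vec3 1 (-1) 1 else if l = 2 then vec3 1 1 (-1) else vec3 1 1 1)"
definition c2 :: "nat \<Rightarrow> 3 \<Rightarrow> complex" where
  "c2 l = (if l = 0 then vec3 (-1) (-1) (-1) else if l = 1 then vec3 (-1) (-1) 1 else if l = 2 then vec3 (-1) 1 (-1) else vec3 (-1) 1 1)"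

lemma sum4: "(\<Sum>l<(4::nat). f l) = f 0 + f 1 + f 2 + (f 3 :: complex)"
  by (simp add: eval_nat_numeral)

lemma P1_id: "(\<Sum>l<4. a1 l i * b1 l j * c1 l k) = eps3 i j k - pp i j k"
  unfolding sum4
  using ex3[of i] ex3[of j] ex3[of k]
  by (elim disjE; simp add: a1_def b1_def c1_def eps3_def pp_def)

lemma P2_id: "(\<Sum>l<4. a2 l i * b2 l j * c2 l k) = eps3 i j k - 2 * pp i j k"
  unfolding sum4
  using ex3[of i] ex3[of j] ex3[of k]
  by (elim disjE; simp add: a2_def b2_def c2_def eps3_def pp_def)


definition fs :: "complex \<Rightarrow> 2 \<Rightarrow> complex" where "fs s i1 = (if i1 = 0 then 1 else s)"

definition xs :: "complex \<Rightarrow> nat \<Rightarrow> 3 \<times> 2 \<Rightarrow> complex" where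
  "xs s l I = (if l < 4 then (1/s) * a1 l (fst I) * fs s (snd I)
     else if l = 4 then (-1/s) * vec3 1 0 0 (fst I) * fs (-s) (snd I)
     else (-1/s) * a2 (l - 5) (fst I) * fs 0 (snd I))"
definition ys :: "complex \<Rightarrow> nat \<Rightarrow> 3 \<times> 2 \<Rightarrow> complex" where
  "ys s l J = (if l < 4 then b1 l (fst J) * fs s (snd J)
     else if l = 4 then vec3 0 1 0 (fst J) * fs (-s) (snd J)
     else b2 (l - 5) (fst J) * fs 0 (snd J))"
definition zs :: "complex \<Rightarrow> nat \<Rightarrow> 3 \<times> 2 \<Rightarrow> complex" where
  "zs s l K = (if l < 4 then c1 l (fst K) * fs s (snd K)
     else if l = 4 then vec3 0 0 1 (fst K) * fs (-s) (snd K)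
     else c2 (l - 5) (fst K) * fs 0 (snd K))"

definition Sq :: "complex \<Rightarrow> (3 \<times> 2, 3 \<times> 2, 3 \<times> 2) tensor" where
  "Sq s = (\<lambda>I J K. \<Sum>l<9. xs s l I * ys s l J * zs s l K)"

lemma sum9: "(\<Sum>l<(9::nat). g l) = (\<Sum>l<4. g l) + g 4 + (\<Sum>l<4. g (l + 5)) "
  by (simp add: eval_nat_numeral add_ac)

lemma pp_vec: "vec3 1 0 0 i * vec3 0 1 0 j * vec3 0 0 1 k = pp i j k"
  using ex3[of i] ex3[of j] ex3[of k] by (elim disjE; simp add: pp_def)

lemma Sq_closed:
  "Sq s (i, i1) (j, j1) (k, k1) =
     (1/s) * (fs s i1 * fs s j1 * fs s k1) * (eps3 i j k - pp i j k)
     - (1/s) * (fs (-s) i1 * fs (-s) j1 * fs (-s) k1) * pp i j k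
     - (1/s) * (fs 0 i1 * fs 0 j1 * fs 0 k1) * (eps3 i j k - 2 * pp i j k)"
proof -
  have A: "(\<Sum>l<4. xs s l (i, i1) * ys s l (j, j1) * zs s l (k, k1)) =
     (1/s) * (fs s i1 * fs s j1 * fs s k1) * (\<Sum>l<4. a1 l i * b1 l j * c1 l k)"
    unfolding sum_distrib_left
    by (rule sum.cong) (simp_all add: xs_def ys_def zs_def mult_ac)
  have B: "xs s 4 (i, i1) * ys s 4 (j, j1) * zs s 4 (k, k1) =
     - (1/s) * (fs (-s) i1 * fs (-s) j1 * fs (-s) k1) * (vec3 1 0 0 i * vec3 0 1 0 j * vec3 0 0 1 k)"
    by (simp add: xs_def ys_def zs_def mult_ac)
  have C: "(\<Sum>l<4. xs s (l + 5) (i, i1) * ys s (l + 5) (j, j1) * zs s (l + 5) (k, k1)) =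
     - (1/s) * (fs 0 i1 * fs 0 j1 * fs 0 k1) * (\<Sum>l<4. a2 l i * b2 l j * c2 l k)"
    unfolding sum_distrib_left
    by (rule sum.cong) (simp_all add: xs_def ys_def zs_def mult_ac)
  show ?thesis
    unfolding Sq_def sum9 A B C P1_id P2_id pp_vec by (simp add: algebra_simps)
qed

lemma Sq_expand:
  assumes "s \<noteq> 0"
  shows "Sq s (i, i1) (j, j1) (k, k1) = T0 (i, i1) (j, j1) (k, k1)
     + s * (if (i1 = 1 \<and> j1 = 1 \<and> k1 = 0) \<or> (i1 = 1 \<and> j1 = 0 \<and> k1 = 1) \<or> (i1 = 0 \<and> j1 = 1 \<and> k1 = 1)
            then eps3 i j k - 2 * pp i j k else 0)
     + s^2 * (if i1 = 1 \<and> j1 = 1 \<and> k1 = 1 then eps3 i j k else 0)"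
  unfolding Sq_closed T0_val
  using ex2[of i1] ex2[of j1] ex2[of k1] assms
  by (elim disjE; simp add: fs_def W_tensor_def field_simps power2_eq_square)

definition sn :: "nat \<Rightarrow> complex" where "sn n = 1 / (of_nat n + 1)"

lemma sn_nz: "sn n \<noteq> 0"
  unfolding sn_def by (metis divide_eq_0_iff of_nat_Suc of_nat_neq_0 one_neq_zero add.commute)

lemma sn_lim: "sn \<longlonglongrightarrow> 0"
proof -
  have "(\<lambda>n. 1 / (of_nat n + 1 :: complex)) = (\<lambda>n. of_real (1 / (real n + 1)))"
    by (simp add: of_real_divide)
  moreover have "(\<lambda>n. 1 / (real n + 1)) \<longlonglongrightarrow> 0"
    using LIMSEQ_inverse_real_of_nat by (simp add: inverse_eq_divide add.commute)
  ultimately show ?thesis unfolding sn_def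
    by (metis of_real_0 tendsto_of_real)
qed

lemma Sq_lim: "(\<lambda>n. Sq (sn n) I J K) \<longlonglongrightarrow> T0 I J K"
proof -
  obtain i i1 where I: "I = (i, i1)" by (metis prod.exhaust)
  obtain j j1 where J: "J = (j, j1)" by (metis prod.exhaust)
  obtain k k1 where K: "K = (k, k1)" by (metis prod.exhaust)
  define A where "A = (if (i1 = 1 \<and> j1 = 1 \<and> k1 = 0) \<or> (i1 = 1 \<and> j1 = 0 \<and> k1 = 1) \<or> (i1 = 0 \<and> j1 = 1 \<and> k1 = 1)
            then eps3 i j k - 2 * pp i j k else 0)"
  define B where "B = (if i1 = 1 \<and> j1 = 1 \<and> k1 = 1 then eps3 i j k else 0)"
  have e: "Sq (sn n) I J K = T0 I J K + sn n * A + (sn n)^2 * B" for n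
    unfolding I J K A_def B_def by (rule Sq_expand[OF sn_nz])
  have "(\<lambda>n. T0 I J K + sn n * A + (sn n)^2 * B) \<longlonglongrightarrow> T0 I J K + 0 * A + 0^2 * B"
    by (intro tendsto_intros sn_lim)
  then show ?thesis unfolding e by simp
qed

lemma upper_bound: "\<exists>S :: nat \<Rightarrow> (3 \<times> 2, 3 \<times> 2, 3 \<times> 2) tensor.
      (\<forall>n. S n \<in> rank_le_set 9) \<and> (\<forall>i j k. (\<lambda>n. S n i j k) \<longlonglongrightarrow> T0 i j k)"
proof (intro exI conjI allI)
  fix n
  show "Sq (sn n) \<in> rank_le_set 9"
    unfolding rank_le_set_def Sq_def by blast
next
  fix i j k
  show "(\<lambda>n. Sq (sn n) i j k) \<longlonglongrightarrow> T0 i j k" by (rule Sq_lim)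
qed

theorem mainTheorem3:
  shows "border_rank (kron T_skewcw2 W_tensor) = 9"
proof -
  have "border_rank T0 = 9"
    unfolding border_rank_def
  proof (rule Least_equality)
    show "\<exists>S :: nat \<Rightarrow> (3 \<times> 2, 3 \<times> 2, 3 \<times> 2) tensor.
      (\<forall>n. S n \<in> rank_le_set 9) \<and> (\<forall>i j k. (\<lambda>n. S n i j k) \<longlonglongrightarrow> T0 i j k)"
      by (rule upper_bound)
  next
    fix y
    assume "\<exists>S :: nat \<Rightarrow> (3 \<times> 2, 3 \<times> 2, 3 \<times> 2) tensor.
      (\<forall>n. S n \<in> rank_le_set y) \<and> (\<forall>i j k. (\<lambda>n. S n i j k) \<longlonglongrightarrow> T0 i j k)"
    then obtain S :: "nat \<Rightarrow> (3 \<times> 2, 3 \<times> 2, 3 \<times> 2) tensor" where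
      "\<forall>n. S n \<in> rank_le_set y" "\<forall>i j k. (\<lambda>n. S n i j k) \<longlonglongrightarrow> T0 i j k" by blast
    then show "9 \<le> y" by (rule lower_bound)
  qed
  then show ?thesis unfolding T0_def .
qed

end
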